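(* If $G$ is a connected graph with girth at least $5$ and maximum degree $\Delta$, then $\chi_D(G)\le \Delta+2$.
   Context: A $k$-coloring of a graph $G$ is a map $\varphi:V(G)\to\{1,\dots,k\}$; it is proper if adjacent vertices get different colors. A coloring $\varphi$ is distinguishing if the only automorphism $f$ of $G$ with $\varphi(f(v))=\varphi(v)$ for all $v$ is the identity. $\chi_D(G)$ is the smallest number of colors in a proper distinguishing coloring of $G$. *)

theory Defs
  imports Main "HOL-Library.Extended_Nat"
begin

definition simple_graph :: "'a set \<Rightarrow> ('a \<Rightarrow> 'a \<Rightarrow> bool) \<Rightarrow> bool" where
  "simple_graph V E \<longleftrightarrow> finite V \<and> (\<forall>u v. E u v \<longrightarrow> u \<in> V \<and> v \<in> V)
     \<and> (\<forall>u v. E u v \<longrightarrow> E v u) \<and> (\<forall>v. \<not> E v v)"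

definition degree :: "'a set \<Rightarrow> ('a \<Rightarrow> 'a \<Rightarrow> bool) \<Rightarrow> 'a \<Rightarrow> nat" where
  "degree V E v = card {u \<in> V. E v u}"

definition max_degree :: "'a set \<Rightarrow> ('a \<Rightarrow> 'a \<Rightarrow> bool) \<Rightarrow> nat" where
  "max_degree V E = Max (degree V E ` V)"

definition connected_graph :: "'a set \<Rightarrow> ('a \<Rightarrow> 'a \<Rightarrow> bool) \<Rightarrow> bool" where
  "connected_graph V E \<longleftrightarrow> V \<noteq> {} \<and> (\<forall>u\<in>V. \<forall>v\<in>V. E\<^sup>*\<^sup>* u v)"

definition is_cycle :: "'a set \<Rightarrow> ('a \<Rightarrow> 'a \<Rightarrow> bool) \<Rightarrow> 'a list \<Rightarrow> bool" where
  "is_cycle V E cs \<longleftrightarrow> length cs \<ge> 3 \<and> distinct cs \<and> set cs \<subseteq> V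
     \<and> (\<forall>i. Suc i < length cs \<longrightarrow> E (cs ! i) (cs ! Suc i))
     \<and> E (last cs) (hd cs)"

text \<open>Girth: length of a shortest cycle (infinity if the graph is acyclic).\<close>
definition girth :: "'a set \<Rightarrow> ('a \<Rightarrow> 'a \<Rightarrow> bool) \<Rightarrow> enat" where
  "girth V E = (INF cs \<in> {cs. is_cycle V E cs}. enat (length cs))"

definition automorphism :: "'a set \<Rightarrow> ('a \<Rightarrow> 'a \<Rightarrow> bool) \<Rightarrow> ('a \<Rightarrow> 'a) \<Rightarrow> bool" where
  "automorphism V E f \<longleftrightarrow> bij_betw f V V \<and> (\<forall>u\<in>V. \<forall>v\<in>V. E u v \<longleftrightarrow> E (f u) (f v))"

definition k_coloring :: "'a set \<Rightarrow> nat \<Rightarrow> ('a \<Rightarrow> nat) \<Rightarrow> bool" where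
  "k_coloring V k \<phi> \<longleftrightarrow> \<phi> ` V \<subseteq> {1..k}"

definition proper_coloring :: "'a set \<Rightarrow> ('a \<Rightarrow> 'a \<Rightarrow> bool) \<Rightarrow> ('a \<Rightarrow> nat) \<Rightarrow> bool" where
  "proper_coloring V E \<phi> \<longleftrightarrow> (\<forall>u\<in>V. \<forall>v\<in>V. E u v \<longrightarrow> \<phi> u \<noteq> \<phi> v)"

definition distinguishing_coloring :: "'a set \<Rightarrow> ('a \<Rightarrow> 'a \<Rightarrow> bool) \<Rightarrow> ('a \<Rightarrow> nat) \<Rightarrow> bool" where
  "distinguishing_coloring V E \<phi> \<longleftrightarrow>
     (\<forall>f. automorphism V E f \<and> (\<forall>v\<in>V. \<phi> (f v) = \<phi> v) \<longrightarrow> (\<forall>v\<in>V. f v = v))"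

definition distinguishing_chromatic_number :: "'a set \<Rightarrow> ('a \<Rightarrow> 'a \<Rightarrow> bool) \<Rightarrow> nat" where
  "distinguishing_chromatic_number V E =
     (LEAST k. \<exists>\<phi>. k_coloring V k \<phi> \<and> proper_coloring V E \<phi> \<and> distinguishing_coloring V E \<phi>)"

end

theory Submission
  imports Defs
begin


locale G5 =
  fixes V :: "'a set" and E :: "'a \<Rightarrow> 'a \<Rightarrow> bool"
  assumes sg: "simple_graph V E" and conn: "connected_graph V E" and gir: "girth V E \<ge> 5"
begin

lemma fin: "finite V" using sg by (simp add: simple_graph_def)
lemma sym: "E a b \<Longrightarrow> E b a" using sg by (simp add: simple_graph_def)
lemma inV1: "E a b \<Longrightarrow> a \<in> V" using sg by (simp add: simple_graph_def)
lemma inV2: "E a b \<Longrightarrow> b \<in> V" using sg by (simp add: simple_graph_def)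
lemma irr: "\<not> E a a" using sg by (simp add: simple_graph_def)

lemma cyc_len: assumes "is_cycle V E cs" shows "5 \<le> length cs"
proof -
  have "girth V E \<le> enat (length cs)" unfolding girth_def
    by (rule INF_lower) (use assms in simp)
  with gir have "(5::enat) \<le> enat (length cs)" by (rule order_trans)
  thus ?thesis by (simp add: numeral_eq_enat)
qed

lemma no_tri: assumes "E a b" "E b c" "E c a" shows False
proof -
  have "a \<noteq> b" "b \<noteq> c" "c \<noteq> a" using assms irr by metis+
  hence "is_cycle V E [a,b,c]" using assms inV1 unfolding is_cycle_def
    by (auto simp: less_Suc_eq nth_Cons split: nat.splits)
  from cyc_len[OF this] show False by simp
qed

lemma no_sq: assumes "E a b" "E b c" "E c d" "E d a" "a \<noteq> c" "b \<noteq> d" shows False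
proof -
  have "a \<noteq> b" "b \<noteq> c" "c \<noteq> d" "d \<noteq> a" using assms irr by metis+
  hence "is_cycle V E [a,b,c,d]" using assms inV1 unfolding is_cycle_def
    by (auto simp: less_Suc_eq nth_Cons split: nat.splits)
  from cyc_len[OF this] show False by simp
qed

lemma deg_le: "x \<in> V \<Longrightarrow> degree V E x \<le> max_degree V E"
  unfolding max_degree_def using fin by (simp add: Max_ge)

lemma crossing: assumes "E\<^sup>*\<^sup>* a b" "a \<in> S" "b \<notin> S" shows "\<exists>x y. x \<in> S \<and> y \<notin> S \<and> E x y"
  using assms by (induction rule: rtranclp_induct) auto

lemma exists_cross: assumes "S \<subseteq> V" "S \<noteq> {}" "S \<noteq> V" shows "\<exists>z y. z \<in> V - S \<and> y \<in> S \<and> E z y"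
proof -
  obtain a where a: "a \<in> S" using assms by auto
  obtain b where b: "b \<in> V" "b \<notin> S" using assms by auto
  have "E\<^sup>*\<^sup>* a b" using conn a b assms(1) unfolding connected_graph_def by auto
  then obtain x y where "x \<in> S" "y \<notin> S" "E x y" using crossing a b by blast
  thus ?thesis using sym inV2 by blast
qed

end


definition bfs_inv :: "'a set \<Rightarrow> ('a \<Rightarrow> 'a \<Rightarrow> bool) \<Rightarrow> 'a \<Rightarrow> 'a set \<Rightarrow> ('a \<Rightarrow> nat) \<Rightarrow> bool" where
  "bfs_inv V E v S \<rho> \<longleftrightarrow> S \<subseteq> V \<and> v \<in> S \<and> inj_on \<rho> S \<and> \<rho> ` S = {0..<card S} \<and> \<rho> v = 0
   \<and> (\<forall>x\<in>S-{v}. \<exists>y\<in>S. E x y \<and> \<rho> y < \<rho> x)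
   \<and> (\<forall>x\<in>S-{v}. \<forall>x'\<in>S. \<forall>y'\<in>S. \<rho> x < \<rho> x' \<longrightarrow> E x' y' \<longrightarrow> \<rho> y' < \<rho> x' \<longrightarrow> (\<exists>y\<in>S. E x y \<and> \<rho> y < \<rho> x \<and> \<rho> y \<le> \<rho> y'))
   \<and> (\<forall>x\<in>S-{v}. \<forall>z\<in>V-S. \<forall>y'\<in>S. E z y' \<longrightarrow> (\<exists>y\<in>S. E x y \<and> \<rho> y < \<rho> x \<and> \<rho> y \<le> \<rho> y'))"

context G5 begin

lemma bfs_base: "v \<in> V \<Longrightarrow> bfs_inv V E v {v} (\<lambda>_. 0)"
  unfolding bfs_inv_def by auto

lemma bfs_step:
  assumes I: "bfs_inv V E v S \<rho>" and ne: "S \<noteq> V"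
  shows "\<exists>S' \<rho>'. bfs_inv V E v S' \<rho>' \<and> card S' = Suc (card S)"
proof -
  have SV: "S \<subseteq> V" and vS: "v \<in> S" and inj: "inj_on \<rho> S" and img: "\<rho> ` S = {0..<card S}"
    and rv: "\<rho> v = 0"
    and IA: "\<forall>x\<in>S-{v}. \<exists>y\<in>S. E x y \<and> \<rho> y < \<rho> x"
    and IB: "\<forall>x\<in>S-{v}. \<forall>x'\<in>S. \<forall>y'\<in>S. \<rho> x < \<rho> x' \<longrightarrow> E x' y' \<longrightarrow> \<rho> y' < \<rho> x' \<longrightarrow> (\<exists>y\<in>S. E x y \<and> \<rho> y < \<rho> x \<and> \<rho> y \<le> \<rho> y')"
    and IF: "\<forall>x\<in>S-{v}. \<forall>z\<in>V-S. \<forall>y'\<in>S. E z y' \<longrightarrow> (\<exists>y\<in>S. E x y \<and> \<rho> y < \<rho> x \<and> \<rho> y \<le> \<rho> y')"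
    using I unfolding bfs_inv_def by blast+
  have finS: "finite S" using SV fin finite_subset by blast
  have rlt: "\<And>x. x \<in> S \<Longrightarrow> \<rho> x < card S" using img by auto
  have "\<exists>z y. z \<in> V - S \<and> y \<in> S \<and> E z y" using exists_cross[OF SV _ ne] vS by blast
  define P where "P = (\<lambda>n. \<exists>z y. z \<in> V - S \<and> y \<in> S \<and> E z y \<and> \<rho> y = n)"
  have "\<exists>n. P n" unfolding P_def using \<open>\<exists>z y. _\<close> by blast
  hence "P (LEAST n. P n)" by (rule LeastI_ex)
  then obtain z y0 where z: "z \<in> V - S" and y0: "y0 \<in> S" "E z y0" and y0l: "\<rho> y0 = (LEAST n. P n)"
    unfolding P_def by blast
  have minim: "\<And>z' y'. z' \<in> V - S \<Longrightarrow> y' \<in> S \<Longrightarrow> E z' y' \<Longrightarrow> \<rho> y0 \<le> \<rho> y'"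
    unfolding y0l by (rule Least_le) (auto simp: P_def)
  define S' where "S' = insert z S"
  define \<rho>' where "\<rho>' = \<rho>(z := card S)"
  have zS: "z \<notin> S" using z by blast
  have r'S: "\<And>x. x \<in> S \<Longrightarrow> \<rho>' x = \<rho> x" unfolding \<rho>'_def using zS by auto
  have r'z: "\<rho>' z = card S" unfolding \<rho>'_def by simp
  have cardS': "card S' = Suc (card S)" unfolding S'_def using finS zS by simp
  have "bfs_inv V E v S' \<rho>'"
    unfolding bfs_inv_def
  proof (intro conjI)
    show "S' \<subseteq> V" using SV z unfolding S'_def by blast
    show "v \<in> S'" using vS unfolding S'_def by blast
    have imS: "\<rho>' ` S = \<rho> ` S" using r'S by (rule image_cong[OF refl])
    have injS: "inj_on \<rho>' S" using inj r'S inj_on_cong by blast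
    show "inj_on \<rho>' S'" unfolding S'_def inj_on_insert using injS imS img r'z zS by auto
    show "\<rho>' ` S' = {0..<card S'}" unfolding S'_def image_insert imS img r'z
      using cardS'[unfolded S'_def] by auto
    show "\<rho>' v = 0" using r'S vS rv by simp
    show "\<forall>x\<in>S'-{v}. \<exists>y\<in>S'. E x y \<and> \<rho>' y < \<rho>' x"
    proof
      fix x assume x: "x \<in> S' - {v}"
      show "\<exists>y\<in>S'. E x y \<and> \<rho>' y < \<rho>' x"
      proof (cases "x = z")
        case True thus ?thesis using y0 rlt r'S r'z unfolding S'_def by auto
      next
        case False
        hence "x \<in> S - {v}" using x unfolding S'_def by auto
        then obtain y where "y \<in> S" "E x y" "\<rho> y < \<rho> x" using IA by blast
        thus ?thesis using r'S \<open>x \<in> S - {v}\<close> unfolding S'_def by auto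
      qed
    qed
    show "\<forall>x\<in>S'-{v}. \<forall>x'\<in>S'. \<forall>y'\<in>S'. \<rho>' x < \<rho>' x' \<longrightarrow> E x' y' \<longrightarrow> \<rho>' y' < \<rho>' x' \<longrightarrow> (\<exists>y\<in>S'. E x y \<and> \<rho>' y < \<rho>' x \<and> \<rho>' y \<le> \<rho>' y')"
    proof (intro ballI impI)
      fix x x' y' assume x: "x \<in> S' - {v}" and x': "x' \<in> S'" and y': "y' \<in> S'"
        and lt: "\<rho>' x < \<rho>' x'" and e: "E x' y'" and lt2: "\<rho>' y' < \<rho>' x'"
      have x'S: "x' \<noteq> z \<Longrightarrow> x' \<in> S" using x' unfolding S'_def by auto
      have xz: "x \<noteq> z"
      proof
        assume "x = z"
        hence "x' \<noteq> z" using lt by auto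
        hence "\<rho>' x' < card S" using x'S rlt r'S by auto
        thus False using lt \<open>x = z\<close> r'z by simp
      qed
      have xS: "x \<in> S" using x xz unfolding S'_def by auto
      have y'z: "y' \<noteq> z"
      proof
        assume "y' = z"
        hence "x' \<noteq> z" using e irr by auto
        hence "\<rho>' x' < card S" using x'S rlt r'S by auto
        thus False using lt2 \<open>y' = z\<close> r'z by simp
      qed
      have y'S: "y' \<in> S" using y' y'z unfolding S'_def by auto
      show "\<exists>y\<in>S'. E x y \<and> \<rho>' y < \<rho>' x \<and> \<rho>' y \<le> \<rho>' y'"
      proof (cases "x' = z")
        case True
        then obtain y where "y \<in> S" "E x y \<and> \<rho> y < \<rho> x \<and> \<rho> y \<le> \<rho> y'"
          using IF xS x z y'S e by blast
        thus ?thesis using r'S xS y'S unfolding S'_def by auto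
      next
        case False
        hence "x' \<in> S" using x' unfolding S'_def by auto
        have "\<rho> x < \<rho> x'" "\<rho> y' < \<rho> x'" using lt lt2 r'S xS y'S \<open>x' \<in> S\<close> by auto
        then obtain y where "y \<in> S" "E x y \<and> \<rho> y < \<rho> x \<and> \<rho> y \<le> \<rho> y'"
          using IB[rule_format, of x x' y'] xS x y'S e \<open>x' \<in> S\<close> by auto
        thus ?thesis using r'S xS y'S unfolding S'_def by auto
      qed
    qed
    show "\<forall>x\<in>S'-{v}. \<forall>z'\<in>V-S'. \<forall>y'\<in>S'. E z' y' \<longrightarrow> (\<exists>y\<in>S'. E x y \<and> \<rho>' y < \<rho>' x \<and> \<rho>' y \<le> \<rho>' y')"
    proof (intro ballI impI)
      fix x z' y' assume x: "x \<in> S' - {v}" and z': "z' \<in> V - S'" and y': "y' \<in> S'" and e: "E z' y'"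
      have z'S: "z' \<in> V - S" using z' unfolding S'_def by auto
      show "\<exists>y\<in>S'. E x y \<and> \<rho>' y < \<rho>' x \<and> \<rho>' y \<le> \<rho>' y'"
      proof (cases "x = z")
        case True
        have "\<rho> y0 \<le> \<rho>' y'"
        proof (cases "y' = z")
          case True thus ?thesis using r'z rlt y0 by (simp add: less_imp_le)
        next
          case False hence "y' \<in> S" using y' unfolding S'_def by auto
          thus ?thesis using minim[OF z'S _ e] r'S by simp
        qed
        thus ?thesis using True y0 r'S r'z rlt unfolding S'_def by auto
      next
        case False
        hence xS: "x \<in> S - {v}" using x unfolding S'_def by auto
        show ?thesis
        proof (cases "y' = z")
          case True
          obtain y where "y \<in> S" "E x y" "\<rho> y < \<rho> x" using IA xS by blast
          thus ?thesis using True r'S r'z rlt xS unfolding S'_def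
            by (auto intro!: bexI[of _ y] less_imp_le)
        next
          case False hence "y' \<in> S" using y' unfolding S'_def by auto
          then obtain y where "y \<in> S" "E x y \<and> \<rho> y < \<rho> x \<and> \<rho> y \<le> \<rho> y'"
            using IF xS z'S e by blast
          thus ?thesis using r'S xS \<open>y' \<in> S\<close> unfolding S'_def by auto
        qed
      qed
    qed
  qed
  thus ?thesis using cardS' by blast
qed

end


context G5 begin
lemma bfs_exists: assumes vV: "v \<in> V" shows "\<exists>\<rho>. bfs_inv V E v V \<rho>"
proof -
  have "\<exists>S \<rho>. bfs_inv V E v S \<rho> \<and> (k \<le> card S \<or> S = V)" for k
  proof (induction k)
    case 0 thus ?case using bfs_base[OF vV] by blast
  next
    case (Suc k)
    then obtain S \<rho> where I: "bfs_inv V E v S \<rho>" and h: "k \<le> card S \<or> S = V" by blast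
    show ?case
    proof (cases "S = V \<or> Suc k \<le> card S")
      case True thus ?thesis using I by blast
    next
      case False
      then obtain S' \<rho>' where "bfs_inv V E v S' \<rho>'" "card S' = Suc (card S)" using bfs_step[OF I] by blast
      thus ?thesis using h False by auto
    qed
  qed
  then obtain S \<rho> where I: "bfs_inv V E v S \<rho>" and h: "card V \<le> card S \<or> S = V" by blast
  have "S \<subseteq> V" using I unfolding bfs_inv_def by blast
  hence "S = V" using h fin card_seteq by blast
  thus ?thesis using I by blast
qed
end

locale G5R = G5 +
  fixes v :: 'a and \<rho> :: "'a \<Rightarrow> nat"
  assumes bi: "bfs_inv V E v V \<rho>"
begin

lemma vV: "v \<in> V" and inj: "inj_on \<rho> V" and img: "\<rho> ` V = {0..<card V}" and rv: "\<rho> v = 0"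
  using bi unfolding bfs_inv_def by blast+

lemma PA: "x \<in> V \<Longrightarrow> x \<noteq> v \<Longrightarrow> \<exists>y. E x y \<and> \<rho> y < \<rho> x"
  using bi unfolding bfs_inv_def by blast

lemma PB: "x \<in> V \<Longrightarrow> x \<noteq> v \<Longrightarrow> x' \<in> V \<Longrightarrow> \<rho> x < \<rho> x' \<Longrightarrow> E x' y' \<Longrightarrow> \<rho> y' < \<rho> x'
   \<Longrightarrow> \<exists>y. E x y \<and> \<rho> y < \<rho> x \<and> \<rho> y \<le> \<rho> y'"
proof -
  assume a: "x \<in> V" "x \<noteq> v" "x' \<in> V" "\<rho> x < \<rho> x'" "E x' y'" "\<rho> y' < \<rho> x'"
  have "y' \<in> V" using a inV2 by blast
  thus ?thesis using a bi unfolding bfs_inv_def by blast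
qed

lemma rinj: "x \<in> V \<Longrightarrow> y \<in> V \<Longrightarrow> \<rho> x = \<rho> y \<Longrightarrow> x = y"
  using inj by (simp add: inj_on_def)

lemma pos: "x \<in> V \<Longrightarrow> x \<noteq> v \<Longrightarrow> 0 < \<rho> x"
  using rinj[OF _ vV] rv by fastforce

definition PP :: "'a \<Rightarrow> 'a set" where "PP u = {x. E u x \<and> \<rho> x < \<rho> u}"
definition WW :: "'a \<Rightarrow> 'a set" where
  "WW u = {w\<in>V. \<rho> w < \<rho> u \<and> (\<exists>p. E w p \<and> E u p \<and> {x. E w x \<and> \<rho> x < \<rho> w} = {p}
      \<and> {x. E u x \<and> \<rho> x < \<rho> w} = {p})}"
definition AA :: "'a \<Rightarrow> 'a set" where "AA u = PP u \<union> WW u"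

lemma W_struct:
  assumes w: "w \<in> V" "\<rho> w < \<rho> u" and p: "E w p" "E u p"
    and s1: "{x. E w x \<and> \<rho> x < \<rho> w} = {p}" and s2: "{x. E u x \<and> \<rho> x < \<rho> w} = {p}"
  shows "PP u = {p}"
proof -
  have uV: "u \<in> V" using p inV1 by blast
  have pV: "p \<in> V" using p inV2 by blast
  have pw: "\<rho> p < \<rho> w" using s1 by auto
  have "p \<in> PP u" using p pw w unfolding PP_def by auto
  moreover have "r = p" if r: "r \<in> PP u" for r
  proof (rule ccontr)
    assume rp: "r \<noteq> p"
    have er: "E u r" and ru: "\<rho> r < \<rho> u" using r unfolding PP_def by auto
    have rV: "r \<in> V" using er inV2 by blast
    have "\<not> \<rho> r < \<rho> w" using s2 er rp by blast
    moreover have "r \<noteq> w" using no_tri[of u w p] er p sym by blast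
    ultimately have wr: "\<rho> w < \<rho> r" using rinj[OF rV w(1)] by fastforce
    have rv': "r \<noteq> v" using wr rv by auto
    obtain s where s: "E r s" "\<rho> s < \<rho> r" "\<rho> s \<le> \<rho> p"
      using PB[OF rV rv' uV ru p(2)] pw w by auto
    have wv: "w \<noteq> v" using pw rv by auto
    obtain y where y: "E w y" "\<rho> y < \<rho> w" "\<rho> y \<le> \<rho> s"
      using PB[OF w(1) wv rV wr s(1) s(2)] by blast
    have "y = p" using s1 y by blast
    hence "s = p" using s y rinj[OF _ pV, of s] inV2 by fastforce
    thus False using no_tri[of r p u] s(1) p(2) er sym by blast
  qed
  ultimately show ?thesis by blast
qed

lemma AA_lt: "x \<in> AA u \<Longrightarrow> \<rho> x < \<rho> u"
  unfolding AA_def PP_def WW_def by auto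

lemma AA_V: "AA u \<subseteq> V"
  unfolding AA_def PP_def WW_def using inV2 by auto

lemma card_AA: assumes uV: "u \<in> V" shows "card (AA u) \<le> max_degree V E"
proof (cases "WW u = {}")
  case True
  hence "AA u \<subseteq> {x\<in>V. E u x}" unfolding AA_def PP_def using inV2 by auto
  hence "card (AA u) \<le> degree V E u" unfolding degree_def using fin by (simp add: card_mono)
  thus ?thesis using deg_le[OF uV] by simp
next
  case False
  then obtain w p where w: "w \<in> V" "\<rho> w < \<rho> u" and p: "E w p" "E u p"
    and s1: "{x. E w x \<and> \<rho> x < \<rho> w} = {p}" and s2: "{x. E u x \<and> \<rho> x < \<rho> w} = {p}"
    unfolding WW_def by blast
  have Pu: "PP u = {p}" by (rule W_struct[OF w p s1 s2])
  have pV: "p \<in> V" using p inV2 by blast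
  have "WW u \<subseteq> {x\<in>V. E p x} - {u}"
  proof
    fix w' assume "w' \<in> WW u"
    then obtain p' where w': "w' \<in> V" "\<rho> w' < \<rho> u" and p': "E w' p'" "E u p'"
      and t1: "{x. E w' x \<and> \<rho> x < \<rho> w'} = {p'}" and t2: "{x. E u x \<and> \<rho> x < \<rho> w'} = {p'}"
      unfolding WW_def by blast
    have "PP u = {p'}" by (rule W_struct[OF w' p' t1 t2])
    hence "p' = p" using Pu by auto
    thus "w' \<in> {x\<in>V. E p x} - {u}" using p' w' sym by auto
  qed
  hence sub: "AA u \<subseteq> insert p ({x\<in>V. E p x} - {u})" unfolding AA_def Pu by blast
  have fN: "finite {x\<in>V. E p x}" using fin by simp
  have uN: "u \<in> {x\<in>V. E p x}" using uV p sym by auto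
  have "card (AA u) \<le> card (insert p ({x\<in>V. E p x} - {u}))"
    using sub fN by (intro card_mono) auto
  also have "\<dots> \<le> Suc (card ({x\<in>V. E p x} - {u}))" by (rule card_insert_le_m1) (auto simp: card_insert_le)
  finally have "card (AA u) \<le> Suc (card ({x\<in>V. E p x} - {u}))" .
  also have "\<dots> = card {x\<in>V. E p x}" using fN uN
    by (simp add: card_Diff_singleton) (metis Suc_pred card_gt_0_iff empty_iff uN)
  also have "\<dots> \<le> max_degree V E" using deg_le[OF pV] unfolding degree_def .
  finally show ?thesis .
qed

end


context G5R begin

abbreviation "DD \<equiv> max_degree V E"

definition good :: "('a \<Rightarrow> nat) \<Rightarrow> 'a \<Rightarrow> bool" where
  "good c u \<longleftrightarrow> (u = v \<longrightarrow> c u = DD + 2) \<and> (u \<noteq> v \<longrightarrow> c u \<in> {1..DD+1} \<and> c u \<notin> c ` AA u)"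

lemma free_col: assumes "u \<in> V" shows "\<exists>col. col \<in> {1..DD+1} \<and> col \<notin> c ` AA u"
proof (rule ccontr)
  assume "\<not> ?thesis"
  hence "{1..DD+1} \<subseteq> c ` AA u" by auto
  moreover have fA: "finite (AA u)" using AA_V fin finite_subset by blast
  ultimately have "card {1..DD+1} \<le> card (c ` AA u)"
    by (intro card_mono) auto
  also have "\<dots> \<le> card (AA u)" using fA by (rule card_image_le)
  also have "\<dots> \<le> DD" using card_AA[OF assms] .
  finally show False by simp
qed

lemma goodv: "good c v \<Longrightarrow> c v = DD + 2" unfolding good_def by simp
lemma goodn: "good c u \<Longrightarrow> u \<noteq> v \<Longrightarrow> c u \<in> {1..DD+1} \<and> c u \<notin> c ` AA u"
  unfolding good_def by simp

lemma col_exists: "\<exists>c. \<forall>u\<in>V. \<rho> u < n \<longrightarrow> good c u"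
proof (induction n)
  case 0 thus ?case by simp
next
  case (Suc n)
  then obtain c where c: "\<forall>u\<in>V. \<rho> u < n \<longrightarrow> good c u" by blast
  show ?case
  proof (cases "\<exists>u\<in>V. \<rho> u = n")
    case False thus ?thesis using c less_Suc_eq by blast
  next
    case True
    then obtain u where u: "u \<in> V" "\<rho> u = n" by blast
    obtain col where col: "u = v \<longrightarrow> col = DD + 2" "u \<noteq> v \<longrightarrow> col \<in> {1..DD+1} \<and> col \<notin> c ` AA u"
      using free_col[OF u(1), of c] by (cases "u = v") auto
    define c' where "c' = c(u := col)"
    have im: "c' ` AA x = c ` AA x" if "\<rho> x \<le> n" for x
    proof -
      have "u \<notin> AA x" using AA_lt that u by fastforce
      thus ?thesis unfolding c'_def by auto
    qed
    have "good c' x" if x: "x \<in> V" "\<rho> x < Suc n" for x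
    proof (cases "x = u")
      case True thus ?thesis using col im[of u] u unfolding good_def c'_def by auto
    next
      case False
      hence "\<rho> x < n" using x u rinj by fastforce
      thus ?thesis using c x im[of x] False unfolding good_def c'_def by auto
    qed
    thus ?thesis by blast
  qed
qed

lemma fix_step:
  assumes c: "\<forall>u\<in>V. good c u" and f: "automorphism V E f" and fc: "\<forall>x\<in>V. c (f x) = c x"
    and uV: "u \<in> V" and IH: "\<forall>x\<in>V. \<rho> x < \<rho> u \<longrightarrow> f x = x"
  shows "f u = u"
proof (rule ccontr)
  assume ne: "f u \<noteq> u"
  have bij: "bij_betw f V V" and fE: "\<And>a b. a \<in> V \<Longrightarrow> b \<in> V \<Longrightarrow> E a b \<longleftrightarrow> E (f a) (f b)"
    using f unfolding automorphism_def by auto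
  have fV: "\<And>a. a \<in> V \<Longrightarrow> f a \<in> V" using bij bij_betwE by blast
  have finj: "\<And>a b. a \<in> V \<Longrightarrow> b \<in> V \<Longrightarrow> f a = f b \<Longrightarrow> a = b"
    using bij unfolding bij_betw_def inj_on_def by blast
  define z where "z = f u"
  have zV: "z \<in> V" unfolding z_def using fV uV .
  show False
  proof (cases "u = v")
    case True
    have "c v = DD + 2" using goodv c vV by blast
    hence "c z = DD + 2" using fc uV True unfolding z_def by simp
    moreover have "z \<noteq> v" using ne True z_def by auto
    ultimately show False using goodn[of c z] c zV by auto
  next
    case uv: False
    have "\<not> \<rho> z < \<rho> u"
    proof
      assume "\<rho> z < \<rho> u"
      hence "f z = z" using IH zV by blast
      hence "z = u" using finj[OF zV uV] z_def by simp
      thus False using ne z_def by simp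
    qed
    moreover have "\<rho> z \<noteq> \<rho> u" using rinj[OF zV uV] ne z_def by auto
    ultimately have uz: "\<rho> u < \<rho> z" by simp
    have zv: "z \<noteq> v" using uz rv by auto
    obtain p where p: "E u p" "\<rho> p < \<rho> u" using PA[OF uV uv] by blast
    have pV: "p \<in> V" using p inV2 by blast
    have fp: "f p = p" using IH pV p by blast
    have zp: "E z p" using fE[OF uV pV] p fp z_def by simp
    have Pu: "PP u = {p}"
    proof -
      have rp_all: "r = p" if r: "r \<in> PP u" for r
      proof (rule ccontr)
        assume rp: "r \<noteq> p"
        have er: "E u r" "\<rho> r < \<rho> u" using r unfolding PP_def by auto
        have rV: "r \<in> V" using er inV2 by blast
        have "f r = r" using IH rV er by blast
        hence "E z r" using fE[OF uV rV] er z_def by simp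
        have "E p z" using zp sym by blast
        moreover have "E r u" using er sym by blast
        moreover have "u \<noteq> z" using ne z_def by simp
        ultimately show False using no_sq[of u p z r] p(1) \<open>E z r\<close> rp by blast
      qed
      moreover have "p \<in> PP u" using p unfolding PP_def by simp
      ultimately show ?thesis by blast
    qed
    have s2: "{x. E z x \<and> \<rho> x < \<rho> u} = {p}"
    proof -
      have "x = p" if x: "E z x" "\<rho> x < \<rho> u" for x
      proof -
        have xV: "x \<in> V" using x inV2 by blast
        have "f x = x" using IH xV x by blast
        hence "E u x" using fE[OF uV xV] x z_def by simp
        thus ?thesis using Pu x unfolding PP_def by auto
      qed
      thus ?thesis using zp p(2) by blast
    qed
    have s1: "{x. E u x \<and> \<rho> x < \<rho> u} = {p}" using Pu by (simp add: PP_def)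
    have "u \<in> WW z" unfolding WW_def mem_Collect_eq
      by (intro conjI uV uz exI[of _ p] p(1) zp s1 s2)
    hence "u \<in> AA z" unfolding AA_def by blast
    hence "c z \<noteq> c u" using goodn[of c z] c zV zv by auto
    thus False using fc uV z_def by simp
  qed
qed

lemma main: "distinguishing_chromatic_number V E \<le> DD + 2"
proof -
  obtain c where c0: "\<forall>u\<in>V. \<rho> u < card V \<longrightarrow> good c u" using col_exists by blast
  have rl: "\<rho> u < card V" if "u \<in> V" for u
  proof -
    have "\<rho> u \<in> \<rho> ` V" using that by (rule imageI)
    thus ?thesis using img by simp
  qed
  have c: "\<forall>u\<in>V. good c u" using c0 rl by blast
  have k: "k_coloring V (DD+2) c" unfolding k_coloring_def
  proof
    fix y assume "y \<in> c ` V"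
    then obtain u where "u \<in> V" "y = c u" by blast
    thus "y \<in> {1..DD+2}" using c unfolding good_def by (cases "u = v") auto
  qed
  have pr: "proper_coloring V E c" unfolding proper_coloring_def
  proof (intro ballI impI)
    fix a b assume a: "a \<in> V" and b: "b \<in> V" and e: "E a b"
    have "a \<noteq> b" using e irr by auto
    hence "\<rho> a \<noteq> \<rho> b" using rinj a b by auto
    hence "\<rho> a < \<rho> b \<or> \<rho> b < \<rho> a" by auto
    thus "c a \<noteq> c b"
    proof
      assume lt: "\<rho> a < \<rho> b"
      hence "b \<noteq> v" using rv by auto
      moreover have "a \<in> AA b" unfolding AA_def PP_def using e sym lt by auto
      ultimately have "c b \<notin> c ` AA b" "a \<in> AA b" using goodn[of c b] c b by auto
      thus ?thesis by (metis imageI)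
    next
      assume lt: "\<rho> b < \<rho> a"
      hence "a \<noteq> v" using rv by auto
      moreover have "b \<in> AA a" unfolding AA_def PP_def using e lt by auto
      ultimately have "c a \<notin> c ` AA a" "b \<in> AA a" using goodn[of c a] c a by auto
      thus ?thesis by (metis imageI)
    qed
  qed
  have di: "distinguishing_coloring V E c" unfolding distinguishing_coloring_def
  proof (intro allI impI)
    fix f assume h: "automorphism V E f \<and> (\<forall>v\<in>V. c (f v) = c v)"
    have "\<forall>x\<in>V. \<rho> x = n \<longrightarrow> f x = x" for n
    proof (induction n rule: less_induct)
      case (less n)
      show ?case
      proof (intro ballI impI)
        fix x assume "x \<in> V" "\<rho> x = n"
        thus "f x = x" using fix_step[OF c conjunct1[OF h] conjunct2[OF h]] less by blast
      qed
    qed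
    thus "\<forall>v\<in>V. f v = v" by blast
  qed
  show ?thesis unfolding distinguishing_chromatic_number_def
    by (rule Least_le) (use k pr di in blast)
qed

end

theorem proposition3:
  fixes V :: "'a set" and E :: "'a \<Rightarrow> 'a \<Rightarrow> bool"
  assumes "simple_graph V E"
    and "connected_graph V E"
    and "girth V E \<ge> 5"
  shows "distinguishing_chromatic_number V E \<le> max_degree V E + 2"
proof -
  interpret G5 V E using assms by unfold_locales
  obtain v where v: "v \<in> V" using assms(2) unfolding connected_graph_def by blast
  obtain \<rho> where "bfs_inv V E v V \<rho>" using bfs_exists[OF v] by blast
  then interpret G5R V E v \<rho> by unfold_locales
  show ?thesis by (rule main)
qed


end
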